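(* Let $q$ be a prime number, let $l>2$ be an integer, and consider $m=q^l$ inputs each of size one with reducer capacity $q$. Then there is an A2A mapping schema for these inputs using at most $q\cdot(q(q+1))^{l-1}$ reducers and having communication cost at most $q^2\cdot(q(q+1))^{l-1}$.
   Context: An A2A mapping schema for inputs with sizes $w_1,\dots,w_m$ and reducer capacity $q$ is an assignment of the inputs to a collection of reducers (each input may go to several reducers) such that every reducer receives inputs of total size at most $q$ and every pair of distinct inputs is assigned together to at least one reducer. The communication cost is the sum over reducers of the total size of the inputs assigned to it. *)

theory Defs
  imports Main "HOL-Computational_Algebra.Primes"
begin

(* Inputs are indexed by {0..<m}; input i has size w i.
   A mapping schema is a list of reducers; each reducer is the set of inputs
   assigned to it (an input may be assigned to several reducers). *)

definition reducer_load :: "(nat \<Rightarrow> nat) \<Rightarrow> nat set \<Rightarrow> nat" where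
  "reducer_load w R = (\<Sum>i\<in>R. w i)"

definition a2a_schema :: "nat \<Rightarrow> (nat \<Rightarrow> nat) \<Rightarrow> nat \<Rightarrow> nat set list \<Rightarrow> bool" where
  "a2a_schema m w q rs \<longleftrightarrow>
     (\<forall>R\<in>set rs. R \<subseteq> {0..<m} \<and> reducer_load w R \<le> q) \<and>
     (\<forall>i<m. \<forall>j<m. i \<noteq> j \<longrightarrow> (\<exists>R\<in>set rs. i \<in> R \<and> j \<in> R))"

definition comm_cost :: "(nat \<Rightarrow> nat) \<Rightarrow> nat set list \<Rightarrow> nat" where
  "comm_cost w rs = (\<Sum>R\<leftarrow>rs. reducer_load w R)"

end

theory Submission
  imports Defs "HOL-Number_Theory.Cong"
begin

fun dirs :: "nat \<Rightarrow> nat \<Rightarrow> nat list list" where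
  "dirs q 0 = []"
| "dirs q (Suc n) = map ((#) 1) (List.n_lists n [0..<q]) @ map ((#) 0) (dirs q n)"

lemma dirs_len: "length (dirs q (Suc n)) \<le> (q+1)^n"
proof (induction n)
  case 0 then show ?case by simp
next
  case (Suc n)
  have h: "q * q ^ n \<le> q * (q+1)^n" by (simp add: power_mono)
  have len: "length (dirs q (Suc (Suc n))) = q^Suc n + length (dirs q (Suc n))"
    by (simp add: length_n_lists del: List.n_lists.simps)
  have e: "(q+1)^Suc n = (q+1)^n + q*(q+1)^n" by simp
  have h': "q^Suc n \<le> q*(q+1)^n" using h by simp
  show ?case using len e h' Suc.IH by linarith
qed

lemma dirs_set: assumes "1 < q" shows "d \<in> set (dirs q n) \<Longrightarrow> length d = n \<and> set d \<subseteq> {0..<q}"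
proof (induction n arbitrary: d)
  case 0 then show ?case by simp
next
  case (Suc n)
  from Suc.prems consider (a) ys where "ys \<in> set (List.n_lists n [0..<q])" "d = 1#ys"
    | (b) ys where "ys \<in> set (dirs q n)" "d = 0#ys"
    by (auto simp del: List.n_lists.simps)
  then show ?case
  proof cases
    case a then show ?thesis using assms by (simp add: set_n_lists)
  next
    case b then show ?thesis using Suc.IH[of ys] assms by simp
  qed
qed

lemma dirs_cover:
  assumes "prime q"
  shows "length v = n \<Longrightarrow> set v \<subseteq> {0..<q} \<Longrightarrow> v \<noteq> replicate n 0 \<Longrightarrow>
     \<exists>d\<in>set (dirs q n). \<exists>t<q. v = map (\<lambda>a. t*a mod q) d"
proof (induction n arbitrary: v)
  case 0 then show ?case by simp
next
  case (Suc n)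
  have q1: "1 < q" using assms prime_gt_1_nat by blast
  from Suc.prems(1) obtain a w where v: "v = a # w" and lw: "length w = n"
    by (auto simp: length_Suc_conv)
  show ?case
  proof (cases "a = 0")
    case True
    with Suc.prems v lw have "w \<noteq> replicate n 0" "set w \<subseteq> {0..<q}" by auto
    with Suc.IH lw obtain d t where d: "d \<in> set (dirs q n)" "t<q" "w = map (\<lambda>a. t*a mod q) d"
      by blast
    show ?thesis using d True v
      by (intro bexI[of _ "0#d"] exI[of _ t]) auto
  next
    case False
    have aq: "a < q" using Suc.prems v by auto
    have nd: "\<not> q dvd a" using False aq by (auto dest: dvd_imp_le)
    have "coprime q a" using assms nd by (rule prime_imp_coprime)
    then have "coprime a q" by (simp add: coprime_commute)
    then obtain ai where ai: "[a * ai = Suc 0] (mod q)" using cong_solve_coprime_nat by blast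
    define w' where "w' = map (\<lambda>b. b * ai mod q) w"
    have w'set: "w' \<in> set (List.n_lists n [0..<q])"
      using q1 lw by (auto simp: set_n_lists w'_def)
    have eq: "b = a * (b * ai mod q) mod q" if "b < q" for b
    proof -
      have "a * (b * ai mod q) mod q = a * (b * ai) mod q"
        by (rule mod_mult_right_eq)
      also have "a * (b * ai) = b * (a * ai)" by simp
      also have "b * (a * ai) mod q = b * ((a * ai) mod q) mod q"
        by (rule mod_mult_right_eq[symmetric])
      also have "(a * ai) mod q = Suc 0 mod q" using ai by (simp add: cong_def)
      also have "b * (Suc 0 mod q) mod q = (b * Suc 0) mod q"
        by (rule mod_mult_right_eq)
      also have "\<dots> = b" using that by simp
      finally show ?thesis by simp
    qed
    have "w = map (\<lambda>x. a * x mod q) w'"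
    proof (rule nth_equalityI)
      show "length w = length (map (\<lambda>x. a * x mod q) w')" by (simp add: w'_def)
      fix i assume i: "i < length w"
      have "w ! i < q" using Suc.prems(2) v i nth_mem by fastforce
      then show "w ! i = map (\<lambda>x. a * x mod q) w' ! i" using i eq by (simp add: w'_def)
    qed
    moreover have "a = a * 1 mod q" using aq by simp
    ultimately show ?thesis using v w'set aq
      by (intro bexI[of _ "1#w'"] exI[of _ a]) auto
  qed
qed

lemma map2_mod_lt: "0 < (q::nat) \<Longrightarrow> set (map2 (\<lambda>a b. g a b mod q) x d) \<subseteq> {0..<q}"
  by (auto split: prod.splits)

definition line :: "nat \<Rightarrow> nat list \<Rightarrow> nat list \<Rightarrow> nat list set" where
  "line q x d = (\<lambda>t. map2 (\<lambda>a b. (a + t*b) mod q) x d) ` {0..<q}"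

lemma sum_list_bound: "(\<And>x. x \<in> set xs \<Longrightarrow> f x \<le> c) \<Longrightarrow> sum_list (map f xs) \<le> length xs * c"
  by (induction xs) (auto intro!: add_mono)

theorem theorem12:
  fixes q l :: nat
  assumes "prime q" and "l > 2"
  shows "\<exists>rs. a2a_schema (q ^ l) (\<lambda>_. 1) q rs
              \<and> length rs \<le> q * (q * (q + 1)) ^ (l - 1)
              \<and> comm_cost (\<lambda>_. 1) rs \<le> q ^ 2 * (q * (q + 1)) ^ (l - 1)"
proof -
  have q1: "1 < q" using assms prime_gt_1_nat by blast
  define P where "P = set (List.n_lists l [0..<q])"
  have Pdef: "P = {xs. set xs \<subseteq> {0..<q} \<and> length xs = l}" unfolding P_def set_n_lists by auto
  have "card P = q ^ l" unfolding Pdef using card_lists_length_eq[of "{0..<q}" l] by simp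
  then obtain h where h: "bij_betw h P {0..<q^l}"
    using finite_same_card_bij[of P "{0..<q^l}"] unfolding P_def by auto
  define rs where "rs = [h ` line q x d. x \<leftarrow> List.n_lists l [0..<q], d \<leftarrow> dirs q l]"
  have lenrs: "length rs = q^l * length (dirs q l)"
    unfolding rs_def by (simp add: length_concat comp_def length_n_lists sum_list_triv)
  obtain k where k: "l = Suc k" using assms(2) by (cases l) auto
  have "length rs \<le> q^l * (q+1)^(l-1)"
    unfolding lenrs using dirs_len[of q k] k by simp
  also have "\<dots> = q * (q * (q + 1)) ^ (l - 1)"
    using k by (simp only: power_mult_distrib) simp
  finally have L: "length rs \<le> q * (q * (q + 1)) ^ (l - 1)" .
  have load: "reducer_load (\<lambda>_. 1) R = card R" for R unfolding reducer_load_def by simp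
  have linesub: "line q x d \<subseteq> P" if "x \<in> P" "d \<in> set (dirs q l)" for x d
  proof
    fix z assume "z \<in> line q x d"
    then obtain t where z: "z = map2 (\<lambda>a b. (a + t*b) mod q) x d" unfolding line_def by auto
    have "length x = l" "length d = l" using that dirs_set[OF q1 that(2)] unfolding Pdef by auto
    then have "length z = l" using z by simp
    moreover have "set z \<subseteq> {0..<q}" unfolding z by (rule map2_mod_lt) (use q1 in simp)
    ultimately show "z \<in> P" unfolding Pdef by simp
  qed
  have cardR: "card R \<le> q" if "R \<in> set rs" for R
  proof -
    from that obtain x d where R: "R = h ` line q x d" unfolding rs_def by auto
    have "card R \<le> card (line q x d)" unfolding R by (rule card_image_le) (simp add: line_def)
    also have "\<dots> \<le> q" unfolding line_def using card_image_le[of "{0..<q}"] by simp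
    finally show ?thesis .
  qed
  have subR: "R \<subseteq> {0..<q^l}" if "R \<in> set rs" for R
  proof -
    from that obtain x d where R: "R = h ` line q x d" and x: "x \<in> P" and d: "d \<in> set (dirs q l)"
      unfolding rs_def P_def by auto
    show ?thesis unfolding R using linesub[OF x d] h bij_betw_imp_surj_on by blast
  qed
  have cover: "\<exists>R\<in>set rs. i \<in> R \<and> j \<in> R" if ij: "i < q^l" "j < q^l" "i \<noteq> j" for i j
  proof -
    define x where "x = inv_into P h i"
    define y where "y = inv_into P h j"
    have xP: "x \<in> P" and yP: "y \<in> P" and hx: "h x = i" and hy: "h y = j"
      using ij h unfolding x_def y_def
      by (auto simp: bij_betw_def f_inv_into_f inv_into_into)
    have xy: "x \<noteq> y" using hx hy ij by auto
    have lx: "length x = l" and ly: "length y = l" and sx: "set x \<subseteq> {0..<q}" and sy: "set y \<subseteq> {0..<q}"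
      using xP yP unfolding Pdef by auto
    define v where "v = map2 (\<lambda>a b. (b + q - a) mod q) x y"
    have lv: "length v = l" unfolding v_def using lx ly by simp
    have sv: "set v \<subseteq> {0..<q}" unfolding v_def by (rule map2_mod_lt) (use q1 in simp)
    have vn: "v \<noteq> replicate l 0"
    proof
      assume v0: "v = replicate l 0"
      have "x = y"
      proof (rule nth_equalityI)
        show "length x = length y" using lx ly by simp
        fix n assume n: "n < length x"
        have "x ! n \<in> set x" "y ! n \<in> set y" using n lx ly by simp_all
        then have xn: "x ! n < q" and yn: "y ! n < q" using sx sy by auto
        have "(y ! n + q - x ! n) mod q = 0"
          using arg_cong[OF v0, of "\<lambda>v. v ! n"] n lx ly unfolding v_def by simp
        then show "x ! n = y ! n"
        proof (cases "x ! n \<le> y ! n")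
          case True
          then have "y ! n + q - x ! n = (y ! n - x ! n) + q" by simp
          then have "(y ! n - x ! n) mod q = 0" using \<open>(y ! n + q - x ! n) mod q = 0\<close> by simp
          moreover have "y ! n - x ! n < q" using yn by simp
          ultimately show ?thesis using True by simp
        next
          case False
          then have "y ! n + q - x ! n < q" "0 < y ! n + q - x ! n" using xn by auto
          then show ?thesis using \<open>(y ! n + q - x ! n) mod q = 0\<close> by simp
        qed
      qed
      with xy show False by simp
    qed
    obtain d t where d: "d \<in> set (dirs q l)" and t: "t < q" and vd: "v = map (\<lambda>a. t*a mod q) d"
      using dirs_cover[OF assms(1) lv sv vn] by blast
    have ld: "length d = l" using dirs_set[OF q1 d] by simp
    have x_in: "x \<in> line q x d"
    proof -
      have "x = map2 (\<lambda>a b. (a + 0*b) mod q) x d"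
      proof (rule nth_equalityI)
        show "length x = length (map2 (\<lambda>a b. (a + 0*b) mod q) x d)" using lx ld by simp
        fix n assume n: "n < length x"
        have "x ! n \<in> set x" using n by simp
        then have xn: "x ! n < q" using sx by auto
        show "x ! n = map2 (\<lambda>a b. (a + 0*b) mod q) x d ! n" using n lx ld xn by simp
      qed
      moreover have "(0::nat) \<in> {0..<q}" using q1 by simp
      ultimately show ?thesis unfolding line_def by (rule image_eqI)
    qed
    have y_in: "y \<in> line q x d"
    proof -
      have "y = map2 (\<lambda>a b. (a + t*b) mod q) x d"
      proof (rule nth_equalityI)
        show "length y = length (map2 (\<lambda>a b. (a + t*b) mod q) x d)" using lx ly ld by simp
        fix n assume n: "n < length y"
        have "x ! n \<in> set x" "y ! n \<in> set y" using n lx ly by simp_all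
        then have xn: "x ! n < q" and yn: "y ! n < q" using sx sy by auto
        have vn': "v ! n = t * d ! n mod q" using vd n ly ld by simp
        have vn'': "v ! n = (y ! n + q - x ! n) mod q" using n lx ly unfolding v_def by simp
        have "(x ! n + t * d ! n) mod q = (x ! n + v ! n) mod q"
          using vn' by (simp add: mod_add_right_eq)
        also have "\<dots> = (x ! n + (y ! n + q - x ! n)) mod q"
          using vn'' by (simp add: mod_add_right_eq)
        also have "\<dots> = (y ! n + q) mod q" using xn by simp
        also have "\<dots> = y ! n" using yn by simp
        finally show "y ! n = map2 (\<lambda>a b. (a + t*b) mod q) x d ! n" using n lx ly ld by simp
      qed
      moreover have "t \<in> {0..<q}" using t by simp
      ultimately show ?thesis unfolding line_def by (rule image_eqI)
    qed
    have "h ` line q x d \<in> set rs" unfolding rs_def using xP d unfolding P_def by auto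
    then show ?thesis using x_in y_in hx hy by blast
  qed
  have A: "a2a_schema (q ^ l) (\<lambda>_. 1) q rs"
    unfolding a2a_schema_def load using cardR subR cover by auto
  have "comm_cost (\<lambda>_. 1) rs \<le> length rs * q"
    unfolding comm_cost_def load by (rule sum_list_bound) (rule cardR)
  also have "\<dots> \<le> q * (q * (q + 1)) ^ (l - 1) * q" using L by simp
  also have "\<dots> = q ^ 2 * (q * (q + 1)) ^ (l - 1)" by (simp add: power2_eq_square)
  finally show ?thesis using A L by blast
qed

end
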